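(* Let $U\subset\mathbb{C}$ be a connected, simply connected open set and let $f:U\to\mathbb{R}^3_1$ be a minimal spacelike isothermal parametric surface with normal Gauss map $\tau:U\to\mathbb{H}^2$. Let $M=(U,\mathcal{A})$ be the Riemann surface determined by the conformal (isothermal) atlas $\mathcal{A}$ of the surface. If the set of planar points $\{w\in U: K_f(w)=0\}$ is empty, then $M$ is conformally equivalent to the unit disk $D=\{z\in\mathbb{C}: z\bar z<1\}$.
   Context: $\mathbb{R}^3_1$ is $\mathbb{R}^3$ with Lorentz product $-x^0y^0+x^1y^1+x^2y^2$; $\mathbb{H}^2$ is the upper sheet of the hyperboloid $\langle x,x\rangle=-1$. $K_f$ is the Gauss curvature of the induced metric. Standing assumption of the paper: $M$ is connected and simply connected and (since there are no compact spacelike surfaces) $M$ is conformally either the unit disk or the complex plane $\mathbb{C}$. *)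

theory Defs
  imports "HOL-Analysis.Analysis"
begin

text \<open>Lorentz product on R^3_1 (coordinates x0,x1,x2 are the components 1,2,3).\<close>
definition lor :: "real^3 \<Rightarrow> real^3 \<Rightarrow> real" where
  "lor x y = - (x$1 * y$1) + x$2 * y$2 + x$3 * y$3"

definition H2 :: "(real^3) set" where
  "H2 = {x. lor x x = -1 \<and> x$1 > 0}"

definition pdx :: "(complex \<Rightarrow> 'a::real_normed_vector) \<Rightarrow> complex \<Rightarrow> 'a" where
  "pdx g z = vector_derivative (\<lambda>t::real. g (z + of_real t)) (at 0)"

definition pdy :: "(complex \<Rightarrow> 'a::real_normed_vector) \<Rightarrow> complex \<Rightarrow> 'a" where
  "pdy g z = vector_derivative (\<lambda>t::real. g (z + \<i> * of_real t)) (at 0)"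

fun Ck_on :: "nat \<Rightarrow> complex set \<Rightarrow> (complex \<Rightarrow> 'a::real_normed_vector) \<Rightarrow> bool" where
  "Ck_on 0 U g = continuous_on U g"
| "Ck_on (Suc k) U g =
     (continuous_on U g \<and>
      (\<forall>z\<in>U. (\<lambda>t::real. g (z + of_real t)) differentiable (at 0)
             \<and> (\<lambda>t::real. g (z + \<i> * of_real t)) differentiable (at 0))
      \<and> Ck_on k U (pdx g) \<and> Ck_on k U (pdy g))"

definition smooth_surface_on :: "complex set \<Rightarrow> (complex \<Rightarrow> real^3) \<Rightarrow> bool" where
  "smooth_surface_on U f \<longleftrightarrow> (\<forall>k. Ck_on k U f)"

definition spacelike_isothermal :: "complex set \<Rightarrow> (complex \<Rightarrow> real^3) \<Rightarrow> bool" where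
  "spacelike_isothermal U f \<longleftrightarrow>
     (\<forall>z\<in>U. lor (pdx f z) (pdx f z) > 0
          \<and> lor (pdx f z) (pdx f z) = lor (pdy f z) (pdy f z)
          \<and> lor (pdx f z) (pdy f z) = 0)"

text \<open>Conformal factor: induced metric is lambda (dx^2 + dy^2).\<close>
definition conf_factor :: "(complex \<Rightarrow> real^3) \<Rightarrow> complex \<Rightarrow> real" where
  "conf_factor f z = lor (pdx f z) (pdx f z)"

definition normal_gauss_map :: "complex set \<Rightarrow> (complex \<Rightarrow> real^3) \<Rightarrow> (complex \<Rightarrow> real^3) \<Rightarrow> bool" where
  "normal_gauss_map U f \<tau> \<longleftrightarrow>
     (\<forall>z\<in>U. \<tau> z \<in> H2 \<and> lor (\<tau> z) (pdx f z) = 0 \<and> lor (\<tau> z) (pdy f z) = 0)"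

text \<open>Mean curvature in isothermal coordinates: H = (e + g) / (2 lambda),
  with e = <f_xx, tau>, g = <f_yy, tau>.\<close>
definition mean_curv :: "(complex \<Rightarrow> real^3) \<Rightarrow> (complex \<Rightarrow> real^3) \<Rightarrow> complex \<Rightarrow> real" where
  "mean_curv f \<tau> z = (lor (pdx (pdx f) z) (\<tau> z) + lor (pdy (pdy f) z) (\<tau> z)) / (2 * conf_factor f z)"

text \<open>Gauss curvature of the conformal metric lambda (dx^2+dy^2):
  K = - (Laplacian of log lambda) / (2 lambda).\<close>
definition gauss_curv :: "(complex \<Rightarrow> real^3) \<Rightarrow> complex \<Rightarrow> real" where
  "gauss_curv f z =
     - (pdx (pdx (\<lambda>w. ln (conf_factor f w))) z + pdy (pdy (\<lambda>w. ln (conf_factor f w))) z)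
       / (2 * conf_factor f z)"

text \<open>The Riemann surface (U, A) with A the isothermal atlas is U with its standard
  complex structure; conformal equivalence to the unit disk = biholomorphism.\<close>
definition conf_equiv_disk :: "complex set \<Rightarrow> bool" where
  "conf_equiv_disk U \<longleftrightarrow> (\<exists>g. g holomorphic_on U \<and> bij_betw g U (ball 0 1))"

end

theory Submission
  imports Defs "HOL-Complex_Analysis.Riemann_Mapping"
begin


lemma pdx_hvd:
  assumes "(\<lambda>t. g (z + of_real t)) differentiable (at 0)"
  shows "((\<lambda>t. g (z + of_real t)) has_vector_derivative pdx g z) (at 0)"
  using assms unfolding pdx_def by (simp add: vector_derivative_works[symmetric])

lemma pdy_hvd:
  assumes "(\<lambda>t. g (z + \<i> * of_real t)) differentiable (at 0)"
  shows "((\<lambda>t. g (z + \<i> * of_real t)) has_vector_derivative pdy g z) (at 0)"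
  using assms unfolding pdy_def by (simp add: vector_derivative_works[symmetric])

lemma line_x:
  assumes "\<forall>w. (\<lambda>t. g (w + of_real t)) differentiable (at 0)"
  shows "((\<lambda>t. g (w + of_real t)) has_vector_derivative pdx g (w + of_real s)) (at s)"
proof -
  have 1: "((\<lambda>t. g ((w + of_real s) + of_real t)) has_vector_derivative pdx g (w + of_real s)) (at 0)"
    using pdx_hvd assms by blast
  have 2: "((\<lambda>t. t - s) has_vector_derivative 1) (at s)"
    by (auto intro!: derivative_eq_intros simp: has_real_derivative_iff_has_vector_derivative[symmetric])
  have "(((\<lambda>t. g ((w + of_real s) + of_real t)) \<circ> (\<lambda>t. t - s)) has_vector_derivative (1::real) *\<^sub>R pdx g (w + of_real s)) (at s)"
    by (rule vector_diff_chain_at[OF 2]) (simp add: 1)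
  moreover have "((\<lambda>t. g ((w + of_real s) + of_real t)) \<circ> (\<lambda>t. t - s)) = (\<lambda>t. g (w + of_real t))"
    by (auto simp: fun_eq_iff algebra_simps)
  ultimately show ?thesis by simp
qed

lemma line_y:
  assumes "\<forall>w. (\<lambda>t. g (w + \<i> * of_real t)) differentiable (at 0)"
  shows "((\<lambda>t. g (w + \<i> * of_real t)) has_vector_derivative pdy g (w + \<i> * of_real s)) (at s)"
proof -
  have 1: "((\<lambda>t. g ((w + \<i> * of_real s) + \<i> * of_real t)) has_vector_derivative pdy g (w + \<i> * of_real s)) (at 0)"
    using pdy_hvd assms by blast
  have 2: "((\<lambda>t. t - s) has_vector_derivative 1) (at s)"
    by (auto intro!: derivative_eq_intros simp: has_real_derivative_iff_has_vector_derivative[symmetric])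
  have "(((\<lambda>t. g ((w + \<i> * of_real s) + \<i> * of_real t)) \<circ> (\<lambda>t. t - s)) has_vector_derivative (1::real) *\<^sub>R pdy g (w + \<i> * of_real s)) (at s)"
    by (rule vector_diff_chain_at[OF 2]) (simp add: 1)
  moreover have "((\<lambda>t. g ((w + \<i> * of_real s) + \<i> * of_real t)) \<circ> (\<lambda>t. t - s)) = (\<lambda>t. g (w + \<i> * of_real t))"
    by (auto simp: fun_eq_iff algebra_simps)
  ultimately show ?thesis by simp
qed

lemma line_bound_pos:
  fixes \<phi> :: "real \<Rightarrow> 'a::real_normed_vector"
  assumes d: "\<And>t. (\<phi> has_vector_derivative \<phi>' t) (at t)"
    and b: "\<And>t. 0 \<le> t \<Longrightarrow> t \<le> s \<Longrightarrow> norm (\<phi>' t - B) \<le> e"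
    and s: "0 < s"
  shows "norm (\<phi> s - \<phi> 0 - s *\<^sub>R B) \<le> s * e"
proof -
  let ?\<psi> = "\<lambda>t. \<phi> t - t *\<^sub>R B"
  have dd: "(?\<psi> has_vector_derivative (\<phi>' t - B)) (at t)" for t
    using d[of t] by (auto intro!: derivative_eq_intros)
  have c: "continuous_on {0..s} ?\<psi>"
    using dd by (meson continuous_at_imp_continuous_on has_vector_derivative_continuous)
  have c2: "continuous_on {0..s} (\<lambda>t. t * e)" by (intro continuous_intros)
  have d2: "((\<lambda>t. t * e) has_vector_derivative e) (at t)" for t
    by (auto intro!: derivative_eq_intros simp: has_real_derivative_iff_has_vector_derivative[symmetric])
  have "norm (?\<psi> s - ?\<psi> 0) \<le> s * e - 0 * e"
    by (rule differentiable_bound_general[OF s c c2 dd d2]) (use b in auto)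
  then show ?thesis by (simp add: algebra_simps)
qed

lemma line_bound:
  fixes \<phi> :: "real \<Rightarrow> 'a::real_normed_vector"
  assumes d: "\<And>t. (\<phi> has_vector_derivative \<phi>' t) (at t)"
    and b: "\<And>t. \<bar>t\<bar> \<le> \<bar>s\<bar> \<Longrightarrow> norm (\<phi>' t - B) \<le> e"
  shows "norm (\<phi> s - \<phi> 0 - s *\<^sub>R B) \<le> \<bar>s\<bar> * e"
proof (cases "s > 0")
  case True
  then show ?thesis using line_bound_pos[of \<phi> \<phi>' s B e] d b by auto
next
  case False
  show ?thesis
  proof (cases "s = 0")
    case True then show ?thesis by simp
  next
    case False2: False
    with False have s: "0 < - s" by auto
    let ?\<chi> = "\<lambda>t. \<phi> (- t)"
    have dd: "(?\<chi> has_vector_derivative (- \<phi>' (- t))) (at t)" for t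
    proof -
      have 2: "((\<lambda>t. - t) has_vector_derivative -1) (at t)"
        by (auto intro!: derivative_eq_intros simp: has_real_derivative_iff_has_vector_derivative[symmetric])
      have "((\<phi> \<circ> (\<lambda>t. - t)) has_vector_derivative (-1::real) *\<^sub>R \<phi>' (- t)) (at t)"
        by (rule vector_diff_chain_at[OF 2]) (simp add: d)
      then show ?thesis by (simp add: o_def)
    qed
    have "norm (?\<chi> (-s) - ?\<chi> 0 - (-s) *\<^sub>R (- B)) \<le> (-s) * e"
      apply (rule line_bound_pos[OF dd _ s])
      using b by (metis abs_le_iff abs_minus_cancel minus_diff_minus neg_le_0_iff_le norm_minus_cancel order_trans le_minus_iff abs_of_nonneg abs_of_nonpos)
    then show ?thesis using s by simp
  qed
qed


lemma bound_x:
  assumes D: "\<forall>w. (\<lambda>t. g (w + of_real t)) differentiable (at 0)"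
    and b: "\<And>t. \<bar>t\<bar> \<le> \<bar>s\<bar> \<Longrightarrow> norm (pdx g (w + of_real t) - B) \<le> e"
  shows "norm (g (w + of_real s) - g w - s *\<^sub>R B) \<le> \<bar>s\<bar> * e"
  using line_bound[of "\<lambda>t. g (w + of_real t)" "\<lambda>t. pdx g (w + of_real t)" s B e] line_x[OF D] b
  by simp

lemma bound_y:
  assumes D: "\<forall>w. (\<lambda>t. g (w + \<i> * of_real t)) differentiable (at 0)"
    and b: "\<And>t. \<bar>t\<bar> \<le> \<bar>s\<bar> \<Longrightarrow> norm (pdy g (w + \<i> * of_real t) - B) \<le> e"
  shows "norm (g (w + \<i> * of_real s) - g w - s *\<^sub>R B) \<le> \<bar>s\<bar> * e"
  using line_bound[of "\<lambda>t. g (w + \<i> * of_real t)" "\<lambda>t. pdy g (w + \<i> * of_real t)" s B e] line_y[OF D] b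
  by simp

lemma C1_has_derivative:
  fixes g :: "complex \<Rightarrow> 'a::real_normed_vector"
  assumes Dx: "\<forall>w. (\<lambda>t. g (w + of_real t)) differentiable (at 0)"
    and Dy: "\<forall>w. (\<lambda>t. g (w + \<i> * of_real t)) differentiable (at 0)"
    and cx: "continuous_on UNIV (pdx g)" and cy: "continuous_on UNIV (pdy g)"
  shows "(g has_derivative (\<lambda>h. Re h *\<^sub>R pdx g z + Im h *\<^sub>R pdy g z)) (at z)"
  unfolding has_derivative_at_alt
proof (intro conjI allI impI)
  show "bounded_linear (\<lambda>h. Re h *\<^sub>R pdx g z + Im h *\<^sub>R pdy g z)"
    by (intro bounded_linear_add bounded_linear_scaleR_left bounded_linear_Re bounded_linear_Im
        bounded_linear_compose[OF bounded_linear_scaleR_left])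
  fix e :: real assume e: "e > 0"
  have "isCont (pdx g) z" "isCont (pdy g) z" using cx cy by (auto simp: continuous_on_eq_continuous_at)
  then obtain d1 d2 where d1: "d1 > 0" "\<And>w. dist w z < d1 \<Longrightarrow> dist (pdx g w) (pdx g z) < e/2"
    and d2: "d2 > 0" "\<And>w. dist w z < d2 \<Longrightarrow> dist (pdy g w) (pdy g z) < e/2"
    using e unfolding continuous_at_eps_delta by (metis half_gt_zero)
  show "\<exists>d>0. \<forall>y. norm (y - z) < d \<longrightarrow>
           norm (g y - g z - (Re (y - z) *\<^sub>R pdx g z + Im (y - z) *\<^sub>R pdy g z)) \<le> e * norm (y - z)"
  proof (intro exI[of _ "min d1 d2"] conjI allI impI)
    show "min d1 d2 > 0" using d1 d2 by simp
    fix y assume y: "norm (y - z) < min d1 d2"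
    define a where "a = Re (y - z)"
    define b where "b = Im (y - z)"
    have yab: "y = z + of_real a + \<i> * of_real b"
      by (simp add: a_def b_def complex_eq_iff)
    have ah: "\<bar>a\<bar> \<le> norm (y - z)" "\<bar>b\<bar> \<le> norm (y - z)"
      using abs_Re_le_cmod[of "y - z"] abs_Im_le_cmod[of "y - z"] by (simp_all add: a_def b_def)
    have B1: "norm (g (z + of_real a + \<i> * of_real b) - g (z + of_real a) - b *\<^sub>R pdy g z) \<le> \<bar>b\<bar> * (e/2)"
    proof (rule bound_y[OF Dy])
      fix t assume t: "\<bar>t\<bar> \<le> \<bar>b\<bar>"
      have "norm (z + of_real a + \<i> * of_real t - z) = norm (Complex a t)"
        by (simp add: Complex_eq)
      also have "\<dots> \<le> norm (Complex a b)" using t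
        by (simp add: cmod_def power2_le_iff_abs_le[symmetric] abs_le_square_iff)
      also have "\<dots> = norm (y - z)" by (simp add: a_def b_def cmod_def)
      finally have "dist (z + of_real a + \<i> * of_real t) z < d2" using y by (simp add: dist_norm)
      then show "norm (pdy g (z + of_real a + \<i> * of_real t) - pdy g z) \<le> e/2"
        using d2 by (simp add: dist_norm less_imp_le)
    qed
    have B2: "norm (g (z + of_real a) - g z - a *\<^sub>R pdx g z) \<le> \<bar>a\<bar> * (e/2)"
    proof (rule bound_x[OF Dx])
      fix t assume t: "\<bar>t\<bar> \<le> \<bar>a\<bar>"
      have "dist (z + of_real t) z < d1" using t ah y by (simp add: dist_norm)
      then show "norm (pdx g (z + of_real t) - pdx g z) \<le> e/2"
        using d1 by (simp add: dist_norm less_imp_le)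
    qed
    have "norm (g y - g z - (Re (y - z) *\<^sub>R pdx g z + Im (y - z) *\<^sub>R pdy g z))
        = norm ((g (z + of_real a + \<i> * of_real b) - g (z + of_real a) - b *\<^sub>R pdy g z)
              + (g (z + of_real a) - g z - a *\<^sub>R pdx g z))"
    proof -
      have "g y - g z - (a *\<^sub>R pdx g z + b *\<^sub>R pdy g z)
        = (g (z + of_real a + \<i> * of_real b) - g (z + of_real a) - b *\<^sub>R pdy g z)
              + (g (z + of_real a) - g z - a *\<^sub>R pdx g z)"
        by (subst yab) (simp add: algebra_simps)
      moreover have "Re (y - z) = a" "Im (y - z) = b" by (simp_all add: a_def b_def)
      ultimately show ?thesis by (simp only:)
    qed
    also have "\<dots> \<le> \<bar>b\<bar> * (e/2) + \<bar>a\<bar> * (e/2)"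
      by (rule order_trans[OF norm_triangle_ineq add_mono[OF B1 B2]])
    also have "\<dots> \<le> norm (y - z) * (e/2) + norm (y - z) * (e/2)"
      using ah e by (intro add_mono mult_right_mono) auto
    also have "\<dots> = e * norm (y - z)" by simp
    finally show "norm (g y - g z - (Re (y - z) *\<^sub>R pdx g z + Im (y - z) *\<^sub>R pdy g z)) \<le> e * norm (y - z)" .
  qed
qed


lemma near_z:
  assumes "\<bar>t\<bar> \<le> d/3" "\<bar>r\<bar> \<le> d/3" "d > 0"
  shows "dist (z + of_real t + \<i> * of_real r) z < d"
proof -
  have "dist (z + of_real t + \<i> * of_real r) z = cmod (Complex t r)"
    by (simp add: dist_norm Complex_eq)
  also have "\<dots> \<le> \<bar>t\<bar> + \<bar>r\<bar>" using cmod_le[of "Complex t r"] by simp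
  also have "\<dots> < d" using assms by linarith
  finally show ?thesis .
qed

lemma clairaut:
  fixes g :: "complex \<Rightarrow> 'a::real_normed_vector"
  assumes Dx: "\<forall>w. (\<lambda>t. g (w + of_real t)) differentiable (at 0)"
    and Dy: "\<forall>w. (\<lambda>t. g (w + \<i> * of_real t)) differentiable (at 0)"
    and Dxy: "\<forall>w. (\<lambda>t. pdx g (w + \<i> * of_real t)) differentiable (at 0)"
    and Dyx: "\<forall>w. (\<lambda>t. pdy g (w + of_real t)) differentiable (at 0)"
    and c1: "continuous_on UNIV (pdy (pdx g))" and c2: "continuous_on UNIV (pdx (pdy g))"
  shows "pdy (pdx g) z = pdx (pdy g) z"
proof -
  define P where "P = pdy (pdx g) z"
  define Q where "Q = pdx (pdy g) z"
  have key: "norm (P - Q) \<le> 2 * e" if e: "e > 0" for e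
  proof -
    have "isCont (pdy (pdx g)) z" "isCont (pdx (pdy g)) z" using c1 c2 by (auto simp: continuous_on_eq_continuous_at)
    then obtain d1 d2 where d1: "d1 > 0" "\<And>w. dist w z < d1 \<Longrightarrow> dist (pdy (pdx g) w) P < e"
      and d2: "d2 > 0" "\<And>w. dist w z < d2 \<Longrightarrow> dist (pdx (pdy g) w) Q < e"
      using e unfolding continuous_at_eps_delta P_def Q_def by metis
    define d where "d = min d1 d2"
    have d: "d > 0" using d1 d2 by (simp add: d_def)
    define s where "s = d / 3"
    have s: "s > 0" using d by (simp add: s_def)
    have nearP: "norm (pdy (pdx g) (z + of_real t + \<i> * of_real r) - P) \<le> e"
      if "\<bar>t\<bar> \<le> s" "\<bar>r\<bar> \<le> s" for t r
      using near_z[of t d r z] that d d1(2)[of "z + of_real t + \<i> * of_real r"]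
      by (simp add: s_def d_def dist_norm)
    have nearQ: "norm (pdx (pdy g) (z + of_real t + \<i> * of_real r) - Q) \<le> e"
      if "\<bar>t\<bar> \<le> s" "\<bar>r\<bar> \<le> s" for t r
      using near_z[of t d r z] that d d2(2)[of "z + of_real t + \<i> * of_real r"]
      by (simp add: s_def d_def dist_norm)
    define \<Delta> where "\<Delta> = g (z + of_real s + \<i> * of_real s) - g (z + of_real s) - g (z + \<i> * of_real s) + g z"
    define \<phi>1 where "\<phi>1 = (\<lambda>t. g ((z + \<i> * of_real s) + of_real t) - g (z + of_real t))"
    have d\<phi>1: "(\<phi>1 has_vector_derivative (pdx g ((z + \<i> * of_real s) + of_real t) - pdx g (z + of_real t))) (at t)" for t
      unfolding \<phi>1_def by (intro has_vector_derivative_diff line_x[OF Dx])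
    have b1: "norm ((pdx g ((z + \<i> * of_real s) + of_real t) - pdx g (z + of_real t)) - s *\<^sub>R P) \<le> s * e"
      if t: "\<bar>t\<bar> \<le> \<bar>s\<bar>" for t
    proof -
      have "norm (pdx g ((z + of_real t) + \<i> * of_real s) - pdx g (z + of_real t) - s *\<^sub>R P) \<le> \<bar>s\<bar> * e"
        by (rule bound_y[OF Dxy]) (use nearP t s in auto)
      moreover have "(z + of_real t) + \<i> * of_real s = (z + \<i> * of_real s) + of_real t" by simp
      ultimately show ?thesis using s by simp
    qed
    have W1: "norm (\<phi>1 s - \<phi>1 0 - s *\<^sub>R (s *\<^sub>R P)) \<le> \<bar>s\<bar> * (s * e)"
      by (rule line_bound[OF d\<phi>1 b1])
    have E1: "\<phi>1 s - \<phi>1 0 = \<Delta>" unfolding \<phi>1_def \<Delta>_def by (simp add: algebra_simps)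
    define \<phi>2 where "\<phi>2 = (\<lambda>t. g ((z + of_real s) + \<i> * of_real t) - g (z + \<i> * of_real t))"
    have d\<phi>2: "(\<phi>2 has_vector_derivative (pdy g ((z + of_real s) + \<i> * of_real t) - pdy g (z + \<i> * of_real t))) (at t)" for t
      unfolding \<phi>2_def by (intro has_vector_derivative_diff line_y[OF Dy])
    have b2: "norm ((pdy g ((z + of_real s) + \<i> * of_real t) - pdy g (z + \<i> * of_real t)) - s *\<^sub>R Q) \<le> s * e"
      if t: "\<bar>t\<bar> \<le> \<bar>s\<bar>" for t
    proof -
      have "norm (pdy g ((z + \<i> * of_real t) + of_real s) - pdy g (z + \<i> * of_real t) - s *\<^sub>R Q) \<le> \<bar>s\<bar> * e"
      proof (rule bound_x[OF Dyx])
        fix r assume r: "\<bar>r\<bar> \<le> \<bar>s\<bar>"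
        have "z + \<i> * of_real t + of_real r = z + of_real r + \<i> * of_real t" by simp
        then show "norm (pdx (pdy g) (z + \<i> * of_real t + of_real r) - Q) \<le> e"
          using nearQ[of r t] r t s by (simp add: add_ac)
      qed
      moreover have "(z + \<i> * of_real t) + of_real s = (z + of_real s) + \<i> * of_real t" by simp
      ultimately show ?thesis using s by simp
    qed
    have W2: "norm (\<phi>2 s - \<phi>2 0 - s *\<^sub>R (s *\<^sub>R Q)) \<le> \<bar>s\<bar> * (s * e)"
      by (rule line_bound[OF d\<phi>2 b2])
    have E2: "\<phi>2 s - \<phi>2 0 = \<Delta>" unfolding \<phi>2_def \<Delta>_def by (simp add: algebra_simps)
    have "norm ((s * s) *\<^sub>R (P - Q)) = norm ((\<Delta> - s *\<^sub>R (s *\<^sub>R Q)) - (\<Delta> - s *\<^sub>R (s *\<^sub>R P)))"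
      by (simp add: algebra_simps)
    also have "\<dots> \<le> norm (\<Delta> - s *\<^sub>R (s *\<^sub>R Q)) + norm (\<Delta> - s *\<^sub>R (s *\<^sub>R P))"
      by (rule norm_triangle_ineq4)
    also have "\<dots> \<le> \<bar>s\<bar> * (s * e) + \<bar>s\<bar> * (s * e)"
      using W1 W2 E1 E2 by (intro add_mono) auto
    finally have F: "norm ((s * s) *\<^sub>R (P - Q)) \<le> \<bar>s\<bar> * (s * e) + \<bar>s\<bar> * (s * e)" .
    have "norm ((s * s) *\<^sub>R (P - Q)) = (s * s) * norm (P - Q)" using s by simp
    with F s have "(s * s) * norm (P - Q) \<le> (s * s) * (2 * e)" by (simp add: algebra_simps)
    moreover have "0 < s * s" using s by simp
    ultimately show ?thesis by (simp add: mult_le_cancel_left_pos)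
  qed
  have "norm (P - Q) \<le> 0"
  proof (rule field_le_epsilon)
    fix e :: real assume "e > 0"
    then show "norm (P - Q) \<le> 0 + e" using key[of "e/2"] by simp
  qed
  then show ?thesis by (simp add: P_def Q_def)
qed


lemma lor_sym: "lor a b = lor b a"
  by (simp add: lor_def mult.commute)

lemma lor_add_left: "lor (a + b) c = lor a c + lor b c"
  by (simp add: lor_def algebra_simps)

lemma lor_nondeg3:
  fixes a b c v :: "real^3"
  assumes "lor a a \<noteq> 0" "lor b b \<noteq> 0" "lor c c \<noteq> 0" "lor a b = 0" "lor a c = 0" "lor b c = 0"
    "lor a v = 0" "lor b v = 0" "lor c v = 0"
  shows "v = 0"
proof -
  define Jv :: "real^3 \<Rightarrow> real^3" where "Jv x = vector [- x$1, x$2, x$3]" for x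
  define N :: "real^3^3" where "N = vector [Jv a, Jv b, Jv c]"
  define M :: "real^3^3" where "M = vector [a, b, c]"
  define D where "D = N ** transpose M"
  have lorJ: "lor x y = Jv x $ 1 * y $ 1 + Jv x $ 2 * y $ 2 + Jv x $ 3 * y $ 3" for x y
    by (simp add: Jv_def lor_def)
  have D: "D$1$1 = lor a a" "D$1$2 = lor a b" "D$1$3 = lor a c"
     "D$2$1 = lor b a" "D$2$2 = lor b b" "D$2$3 = lor b c"
     "D$3$1 = lor c a" "D$3$2 = lor c b" "D$3$3 = lor c c"
  proof -
    have Dg: "D$i$j = N$i$1 * M$j$1 + N$i$2 * M$j$2 + N$i$3 * M$j$3" for i j
      by (simp add: D_def matrix_matrix_mult_def transpose_def sum_3)
    have rows: "N$1 = Jv a" "N$2 = Jv b" "N$3 = Jv c" "M$1 = a" "M$2 = b" "M$3 = c"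
      by (simp_all add: N_def M_def)
    show "D$1$1 = lor a a" "D$1$2 = lor a b" "D$1$3 = lor a c"
     "D$2$1 = lor b a" "D$2$2 = lor b b" "D$2$3 = lor b c"
     "D$3$1 = lor c a" "D$3$2 = lor c b" "D$3$3 = lor c c"
      by (simp_all only: Dg rows lorJ)
  qed
  have "det D = lor a a * lor b b * lor c c"
  proof -
    have z: "lor b a = 0" "lor c a = 0" "lor c b = 0" "lor a b = 0" "lor a c = 0" "lor b c = 0"
      using assms lor_sym[of b a] lor_sym[of c a] lor_sym[of c b] by simp_all
    show ?thesis unfolding det_3 D z by simp
  qed
  then have "det D \<noteq> 0" using assms by simp
  then have "det N \<noteq> 0" by (simp add: D_def det_mul)
  then have "invertible N" by (simp add: invertible_det_nz)
  then obtain B where "B ** N = mat 1" using invertible_left_inverse by blast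
  then have ker: "\<forall>x. N *v x = 0 \<longrightarrow> x = 0" using matrix_left_invertible_ker by blast
  have "N *v v = 0"
  proof -
    have Ng: "(N *v v) $ i = N$i$1 * v$1 + N$i$2 * v$2 + N$i$3 * v$3" for i
      by (simp add: matrix_vector_mult_def sum_3)
    have rows: "N$1 = Jv a" "N$2 = Jv b" "N$3 = Jv c"
      by (simp_all add: N_def)
    have "(N *v v) $ 1 = 0" "(N *v v) $ 2 = 0" "(N *v v) $ 3 = 0"
      using assms(7,8,9) by (simp_all only: Ng rows lorJ)
    then show ?thesis unfolding vec_eq_iff forall_3 by simp
  qed
  then show ?thesis using ker by blast
qed

lemma lor_hvd:
  assumes "(A has_vector_derivative A') (at t)" "(B has_vector_derivative B') (at t)"
  shows "((\<lambda>t. lor (A t) (B t)) has_vector_derivative (lor (A t) B' + lor A' (B t))) (at t)"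
proof -
  have c1: "((\<lambda>t. A t $ i) has_vector_derivative A' $ i) (at t)" for i
    by (rule bounded_linear.has_vector_derivative[OF bounded_linear_vec_nth assms(1)])
  have c2: "((\<lambda>t. B t $ i) has_vector_derivative B' $ i) (at t)" for i
    by (rule bounded_linear.has_vector_derivative[OF bounded_linear_vec_nth assms(2)])
  have p: "((\<lambda>t. A t $ i * B t $ i) has_vector_derivative (A t $ i * B' $ i + A' $ i * B t $ i)) (at t)" for i
    by (rule bounded_bilinear.has_vector_derivative[OF bounded_bilinear_mult c1 c2])
  have F: "((\<lambda>t. - (A t $ 1 * B t $ 1) + A t $ 2 * B t $ 2 + A t $ 3 * B t $ 3) has_vector_derivative
     (- (A t $ 1 * B' $ 1 + A' $ 1 * B t $ 1) + (A t $ 2 * B' $ 2 + A' $ 2 * B t $ 2) + (A t $ 3 * B' $ 3 + A' $ 3 * B t $ 3))) (at t)"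
    by (rule has_vector_derivative_add[OF has_vector_derivative_add[OF has_vector_derivative_minus[OF p] p] p])
  have E: "(- (A t $ 1 * B' $ 1 + A' $ 1 * B t $ 1) + (A t $ 2 * B' $ 2 + A' $ 2 * B t $ 2) + (A t $ 3 * B' $ 3 + A' $ 3 * B t $ 3))
     = lor (A t) B' + lor A' (B t)" unfolding lor_def by linarith
  have eqf: "(\<lambda>t. lor (A t) (B t)) = (\<lambda>t. - (A t $ 1 * B t $ 1) + A t $ 2 * B t $ 2 + A t $ 3 * B t $ 3)"
    by (rule ext) (simp only: lor_def)
  show ?thesis unfolding eqf E[symmetric] by (rule F)
qed

lemma pdx_lor:
  assumes "(\<lambda>t. A (z + of_real t)) differentiable (at 0)" "(\<lambda>t. B (z + of_real t)) differentiable (at 0)"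
  shows "pdx (\<lambda>w. lor (A w) (B w)) z = lor (A z) (pdx B z) + lor (pdx A z) (B z)"
  using lor_hvd[OF pdx_hvd[OF assms(1)] pdx_hvd[OF assms(2)]] unfolding pdx_def[of "\<lambda>w. lor (A w) (B w)"]
  by (simp add: vector_derivative_at)

lemma pdy_lor:
  assumes "(\<lambda>t. A (z + \<i> * of_real t)) differentiable (at 0)" "(\<lambda>t. B (z + \<i> * of_real t)) differentiable (at 0)"
  shows "pdy (\<lambda>w. lor (A w) (B w)) z = lor (A z) (pdy B z) + lor (pdy A z) (B z)"
  using lor_hvd[OF pdy_hvd[OF assms(1)] pdy_hvd[OF assms(2)]] unfolding pdy_def[of "\<lambda>w. lor (A w) (B w)"]
  by (simp add: vector_derivative_at)

lemma pdx_const: "pdx (\<lambda>w. c) z = 0"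
  unfolding pdx_def by (simp add: vector_derivative_at[OF has_vector_derivative_const])

lemma pdy_const: "pdy (\<lambda>w. c) z = 0"
  unfolding pdy_def by (simp add: vector_derivative_at[OF has_vector_derivative_const])




lemma lor_add_right: "lor a (b + c) = lor a b + lor a c"
  by (simp add: lor_def algebra_simps)

lemma phi_hvd:
  fixes k :: 3
  assumes "(P has_vector_derivative P') F" "(Q has_vector_derivative Q') F"
  shows "((\<lambda>t. complex_of_real (P t $ k) - \<i> * complex_of_real (Q t $ k)) has_vector_derivative
          (complex_of_real (P' $ k) - \<i> * complex_of_real (Q' $ k))) F"
proof -
  have L1: "bounded_linear (\<lambda>x::real^3. complex_of_real (x $ k))"
    by (rule bounded_linear_compose[OF bounded_linear_of_real bounded_linear_vec_nth])
  have L2: "bounded_linear (\<lambda>x::real^3. \<i> * complex_of_real (x $ k))"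
    by (rule bounded_linear_compose[OF bounded_linear_mult_right L1])
  show ?thesis
    by (intro has_vector_derivative_diff bounded_linear.has_vector_derivative[OF L1 assms(1)]
        bounded_linear.has_vector_derivative[OF L2 assms(2)])
qed

lemma surface_facts:
  assumes sm: "smooth_surface_on UNIV f"
  shows "\<forall>w. (\<lambda>t. f (w + of_real t)) differentiable (at 0)"
    "\<forall>w. (\<lambda>t. f (w + \<i> * of_real t)) differentiable (at 0)"
    "\<forall>w. (\<lambda>t. pdx f (w + of_real t)) differentiable (at 0)"
    "\<forall>w. (\<lambda>t. pdx f (w + \<i> * of_real t)) differentiable (at 0)"
    "\<forall>w. (\<lambda>t. pdy f (w + of_real t)) differentiable (at 0)"
    "\<forall>w. (\<lambda>t. pdy f (w + \<i> * of_real t)) differentiable (at 0)"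
    "continuous_on UNIV (pdx (pdx f))" "continuous_on UNIV (pdy (pdx f))"
    "continuous_on UNIV (pdx (pdy f))" "continuous_on UNIV (pdy (pdy f))"
proof -
  have "Ck_on (Suc (Suc 0)) UNIV f" using sm unfolding smooth_surface_on_def by blast
  then show "\<forall>w. (\<lambda>t. f (w + of_real t)) differentiable (at 0)"
    "\<forall>w. (\<lambda>t. f (w + \<i> * of_real t)) differentiable (at 0)"
    "\<forall>w. (\<lambda>t. pdx f (w + of_real t)) differentiable (at 0)"
    "\<forall>w. (\<lambda>t. pdx f (w + \<i> * of_real t)) differentiable (at 0)"
    "\<forall>w. (\<lambda>t. pdy f (w + of_real t)) differentiable (at 0)"
    "\<forall>w. (\<lambda>t. pdy f (w + \<i> * of_real t)) differentiable (at 0)"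
    "continuous_on UNIV (pdx (pdx f))" "continuous_on UNIV (pdy (pdx f))"
    "continuous_on UNIV (pdx (pdy f))" "continuous_on UNIV (pdy (pdy f))"
    by auto
qed

lemma harmonic_f:
  assumes sm: "smooth_surface_on UNIV f" and iso: "spacelike_isothermal UNIV f"
    and ng: "normal_gauss_map UNIV f \<tau>" and H: "\<forall>z. mean_curv f \<tau> z = 0"
  shows "pdx (pdx f) z + pdy (pdy f) z = 0" and "pdy (pdx f) z = pdx (pdy f) z"
proof -
  note F = surface_facts[OF sm]
  show sym: "pdy (pdx f) z = pdx (pdy f) z"
    by (rule clairaut[OF F(1) F(2) F(4) F(5) F(8) F(9)])
  let ?X = "pdx f" and ?Y = "pdy f"
  have e1: "(\<lambda>w. lor (?X w) (?X w)) = (\<lambda>w. lor (?Y w) (?Y w))"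
    using iso unfolding spacelike_isothermal_def by auto
  have e2: "(\<lambda>w. lor (?X w) (?Y w)) = (\<lambda>w. 0)"
    using iso unfolding spacelike_isothermal_def by auto
  have a1: "lor (?X z) (pdx ?X z) + lor (pdx ?X z) (?X z) = lor (?Y z) (pdx ?Y z) + lor (pdx ?Y z) (?Y z)"
    using arg_cong[OF e1, of "\<lambda>g. pdx g z"] F by (simp add: pdx_lor)
  have a2: "lor (?X z) (pdy ?X z) + lor (pdy ?X z) (?X z) = lor (?Y z) (pdy ?Y z) + lor (pdy ?Y z) (?Y z)"
    using arg_cong[OF e1, of "\<lambda>g. pdy g z"] F by (simp add: pdy_lor)
  have a3: "lor (?X z) (pdx ?Y z) + lor (pdx ?X z) (?Y z) = 0"
    using arg_cong[OF e2, of "\<lambda>g. pdx g z"] F by (simp add: pdx_lor pdx_const)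
  have a4: "lor (?X z) (pdy ?Y z) + lor (pdy ?X z) (?Y z) = 0"
    using arg_cong[OF e2, of "\<lambda>g. pdy g z"] F by (simp add: pdy_lor pdy_const)
  have s1: "lor (pdx ?X z) (?X z) = lor (?X z) (pdx ?X z)" "lor (pdx ?Y z) (?Y z) = lor (?Y z) (pdx ?Y z)"
     "lor (pdy ?X z) (?X z) = lor (?X z) (pdy ?X z)" "lor (pdy ?Y z) (?Y z) = lor (?Y z) (pdy ?Y z)"
     "lor (pdx ?X z) (?Y z) = lor (?Y z) (pdx ?X z)"
    by (simp_all add: lor_sym)
  have o1: "lor (?X z) (pdx ?X z + pdy ?Y z) = 0"
    using a1 a4 s1 sym by (simp add: lor_add_right)
  have o2: "lor (?Y z) (pdx ?X z + pdy ?Y z) = 0"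
    using a2 a3 s1 sym by (simp add: lor_add_right)
  have tau: "lor (\<tau> z) (\<tau> z) = -1" "lor (\<tau> z) (?X z) = 0" "lor (\<tau> z) (?Y z) = 0"
    using ng unfolding normal_gauss_map_def H2_def by auto
  have lam: "lor (?X z) (?X z) > 0" "lor (?X z) (?X z) = lor (?Y z) (?Y z)" "lor (?X z) (?Y z) = 0"
    using iso unfolding spacelike_isothermal_def by blast+
  have "(lor (pdx ?X z) (\<tau> z) + lor (pdy ?Y z) (\<tau> z)) / (2 * lor (?X z) (?X z)) = 0"
    using H unfolding mean_curv_def conf_factor_def by auto
  then have "lor (pdx ?X z) (\<tau> z) + lor (pdy ?Y z) (\<tau> z) = 0"
    using lam(1) by simp
  moreover have "lor (\<tau> z) (pdx ?X z) = lor (pdx ?X z) (\<tau> z)" "lor (\<tau> z) (pdy ?Y z) = lor (pdy ?Y z) (\<tau> z)"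
    by (rule lor_sym)+
  ultimately have o3: "lor (\<tau> z) (pdx ?X z + pdy ?Y z) = 0"
    by (simp add: lor_add_right)
  have ts: "lor (?X z) (\<tau> z) = 0" "lor (?Y z) (\<tau> z) = 0"
    using tau lor_sym[of "\<tau> z" "?X z"] lor_sym[of "\<tau> z" "?Y z"] by simp_all
  have "pdx ?X z + pdy ?Y z = 0"
    by (rule lor_nondeg3[of "?X z" "?Y z" "\<tau> z"]) (use lam tau o1 o2 o3 ts in simp_all)
  then show "pdx (pdx f) z + pdy (pdy f) z = 0" by simp
qed


lemma phi_holo:
  fixes k :: 3
  assumes sm: "smooth_surface_on UNIV f" and iso: "spacelike_isothermal UNIV f"
    and ng: "normal_gauss_map UNIV f \<tau>" and H: "\<forall>z. mean_curv f \<tau> z = 0"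
  shows "((\<lambda>z. complex_of_real (pdx f z $ k) - \<i> * complex_of_real (pdy f z $ k)) has_field_derivative
          (complex_of_real (pdx (pdx f) z $ k) - \<i> * complex_of_real (pdx (pdy f) z $ k))) (at z)"
proof -
  note F = surface_facts[OF sm]
  define g where "g = (\<lambda>z. complex_of_real (pdx f z $ k) - \<i> * complex_of_real (pdy f z $ k))"
  define gx where "gx = (\<lambda>z. complex_of_real (pdx (pdx f) z $ k) - \<i> * complex_of_real (pdx (pdy f) z $ k))"
  define gy where "gy = (\<lambda>z. complex_of_real (pdy (pdx f) z $ k) - \<i> * complex_of_real (pdy (pdy f) z $ k))"
  have hx: "((\<lambda>t. g (w + of_real t)) has_vector_derivative gx w) (at 0)" for w
    unfolding g_def gx_def
    by (rule phi_hvd[OF pdx_hvd pdx_hvd]) (use F in auto)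
  have hy: "((\<lambda>t. g (w + \<i> * of_real t)) has_vector_derivative gy w) (at 0)" for w
    unfolding g_def gy_def
    by (rule phi_hvd[OF pdy_hvd pdy_hvd]) (use F in auto)
  have px: "pdx g = gx" using hx unfolding pdx_def by (simp add: fun_eq_iff vector_derivative_at)
  have py: "pdy g = gy" using hy unfolding pdy_def by (simp add: fun_eq_iff vector_derivative_at)
  have cx: "continuous_on UNIV gx" unfolding gx_def using F(7) F(9) by (intro continuous_intros)
  have cy: "continuous_on UNIV gy" unfolding gy_def using F(8) F(10) by (intro continuous_intros)
  have D: "(g has_derivative (\<lambda>h. Re h *\<^sub>R pdx g z + Im h *\<^sub>R pdy g z)) (at z)"
  proof (rule C1_has_derivative)
    show "\<forall>w. (\<lambda>t. g (w + of_real t)) differentiable (at 0)"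
      using differentiableI_vector[OF hx] by blast
    show "\<forall>w. (\<lambda>t. g (w + \<i> * of_real t)) differentiable (at 0)"
      using differentiableI_vector[OF hy] by blast
    show "continuous_on UNIV (pdx g)" "continuous_on UNIV (pdy g)" using px py cx cy by simp_all
  qed
  have h1: "pdx (pdx f) z + pdy (pdy f) z = 0" and h2: "pdy (pdx f) z = pdx (pdy f) z"
    using harmonic_f[OF sm iso ng H] by auto
  have "pdy (pdy f) z $ k = - (pdx (pdx f) z $ k)"
    using arg_cong[OF h1, of "\<lambda>v. v $ k"] by simp
  then have gyz: "gy z = \<i> * gx z"
    unfolding gy_def gx_def using h2 by (simp add: algebra_simps)
  have "(\<lambda>h. Re h *\<^sub>R pdx g z + Im h *\<^sub>R pdy g z) = (\<lambda>h. h * gx z)"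
  proof
    fix h :: complex
    have "Re h *\<^sub>R pdx g z + Im h *\<^sub>R pdy g z = (complex_of_real (Re h) + \<i> * complex_of_real (Im h)) * gx z"
      unfolding px py gyz scaleR_conv_of_real by (simp add: algebra_simps)
    also have "complex_of_real (Re h) + \<i> * complex_of_real (Im h) = h" by (simp add: complex_eq_iff)
    finally show "Re h *\<^sub>R pdx g z + Im h *\<^sub>R pdy g z = h * gx z" .
  qed
  with D have D': "(g has_derivative (\<lambda>h. h * gx z)) (at z)" by simp
  have e: "(\<lambda>h. h * gx z) = (*) (gx z)" by (rule ext) (simp add: mult.commute)
  have "(g has_field_derivative gx z) (at z)"
    using D' unfolding e has_field_derivative_def .
  then show ?thesis unfolding g_def gx_def .
qed



lemma line_holo:
  assumes "G holomorphic_on UNIV"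
  shows "((\<lambda>t. G (w + of_real t * c)) has_vector_derivative (c * deriv G w)) (at 0)"
proof -
  have "((\<lambda>t. complex_of_real t) has_vector_derivative 1) (at 0)"
    using has_vector_derivative_of_real[OF DERIV_ident] by simp
  then have "((\<lambda>t. complex_of_real t * c) has_vector_derivative 1 * c) (at 0)"
    by (rule bounded_linear.has_vector_derivative[OF bounded_linear_mult_left])
  then have "((\<lambda>t. w + complex_of_real t * c) has_vector_derivative 0 + 1 * c) (at 0)"
    by (intro has_vector_derivative_add has_vector_derivative_const)
  then have 1: "((\<lambda>t. w + complex_of_real t * c) has_vector_derivative c) (at 0)" by simp
  have 2: "(G has_field_derivative deriv G w) (at ((\<lambda>t. w + complex_of_real t * c) 0))"
    using holomorphic_derivI[OF assms open_UNIV, of w] by simp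
  show ?thesis using field_vector_diff_chain_at[OF 1 2] by (simp add: o_def)
qed

lemma pdx_Re:
  assumes "G holomorphic_on UNIV"
  shows "pdx (\<lambda>w. Re (G w)) = (\<lambda>w. Re (deriv G w))"
proof
  fix w
  have "((\<lambda>t. Re (G (w + of_real t * 1))) has_vector_derivative Re (1 * deriv G w)) (at 0)"
    by (rule bounded_linear.has_vector_derivative[OF bounded_linear_Re line_holo[OF assms]])
  then have "((\<lambda>t. Re (G (w + of_real t))) has_vector_derivative Re (deriv G w)) (at 0)" by simp
  then show "pdx (\<lambda>w. Re (G w)) w = Re (deriv G w)"
    unfolding pdx_def by (rule vector_derivative_at)
qed

lemma pdy_Re:
  assumes "G holomorphic_on UNIV"
  shows "pdy (\<lambda>w. Re (G w)) = (\<lambda>w. Re (\<i> * deriv G w))"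
proof
  fix w
  have "((\<lambda>t. Re (G (w + of_real t * \<i>))) has_vector_derivative Re (\<i> * deriv G w)) (at 0)"
    by (rule bounded_linear.has_vector_derivative[OF bounded_linear_Re line_holo[OF assms]])
  then have "((\<lambda>t. Re (G (w + \<i> * of_real t))) has_vector_derivative Re (\<i> * deriv G w)) (at 0)"
    by (simp add: mult.commute)
  then show "pdy (\<lambda>w. Re (G w)) w = Re (\<i> * deriv G w)"
    unfolding pdy_def by (rule vector_derivative_at)
qed

lemma harmonic_Re:
  assumes G: "G holomorphic_on UNIV"
  shows "pdx (pdx (\<lambda>w. Re (G w))) z + pdy (pdy (\<lambda>w. Re (G w))) z = 0"
proof -
  have G1: "deriv G holomorphic_on UNIV" by (rule holomorphic_deriv[OF G open_UNIV])
  have G2: "(\<lambda>w. \<i> * deriv G w) holomorphic_on UNIV" by (rule holomorphic_on_mult[OF holomorphic_on_const G1])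
  have "pdx (pdx (\<lambda>w. Re (G w))) z = Re (deriv (deriv G) z)"
    unfolding pdx_Re[OF G] pdx_Re[OF G1] ..
  moreover have "pdy (pdy (\<lambda>w. Re (G w))) z = Re (\<i> * deriv (\<lambda>w. \<i> * deriv G w) z)"
    unfolding pdy_Re[OF G] pdy_Re[OF G2] ..
  moreover have "deriv (\<lambda>w. \<i> * deriv G w) z = \<i> * deriv (deriv G) z"
    by (rule deriv_cmult) (use G1 holomorphic_on_imp_differentiable_at in blast)
  ultimately show ?thesis by simp
qed

lemma sign_const:
  fixes d :: "complex \<Rightarrow> real"
  assumes c: "continuous_on UNIV d" and nz: "\<forall>z. d z \<noteq> 0"
  shows "(\<forall>z. d z > 0) \<or> (\<forall>z. d z < 0)"
proof (rule ccontr)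
  assume "\<not> ?thesis"
  then obtain z1 z2 where z1: "d z1 < 0" and z2: "d z2 > 0" using nz
    by (metis linorder_neqE_linordered_idom)
  let ?h = "\<lambda>t. d (z1 + of_real t * (z2 - z1))"
  have ch: "continuous_on {0..1} ?h"
    by (rule continuous_on_compose2[OF c]) (auto intro!: continuous_intros)
  have "\<exists>x. 0 \<le> x \<and> x \<le> 1 \<and> ?h x = 0"
    by (rule IVT') (use z1 z2 ch in auto)
  then show False using nz by blast
qed

lemma liou:
  assumes P: "P holomorphic_on UNIV" and Q: "Q holomorphic_on UNIV" and lt: "\<forall>z. cmod (Q z) < cmod (P z)"
  shows "\<exists>c. cmod c < 1 \<and> (\<forall>z. Q z = c * P z)"
proof -
  have nz: "P z \<noteq> 0" for z using lt[rule_format, of z] by auto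
  define R where "R = (\<lambda>z. Q z / P z)"
  have hR: "R holomorphic_on UNIV" unfolding R_def using P Q nz by (intro holomorphic_intros) auto
  have bR: "cmod (R z) < 1" for z using lt[rule_format, of z] nz by (simp add: R_def norm_divide divide_less_eq)
  have "bounded (range R)" unfolding bounded_iff using bR by (metis less_imp_le rangeE)
  then have "R constant_on UNIV" by (rule Liouville_theorem[OF hR])
  then obtain c where c: "\<And>z. R z = c" unfolding constant_on_def by blast
  show ?thesis
  proof (intro exI conjI allI)
    show "cmod c < 1" using bR c by metis
    fix z show "Q z = c * P z" using c[of z] nz[of z] by (simp add: R_def field_simps)
  qed
qed

lemma alg_conf:
  fixes x1 x2 x3 y1 y2 y3 :: real
  assumes e1: "-(x1*x1) + x2*x2 + x3*x3 = -(y1*y1) + y2*y2 + y3*y3" and e2: "-(x1*y1) + x2*y2 + x3*y3 = 0"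
  shows "4 * (-(x1*x1) + x2*x2 + x3*x3) = (cmod (Complex (x2 - y3) (-y2 - x3)) - cmod (Complex (x2+y3) (x3 - y2)))^2"
proof -
  define a where "a = Complex (x2 - y3) (-y2 - x3)"
  define b where "b = Complex (x2+y3) (x3 - y2)"
  define p where "p = Complex x1 (-y1)"
  have ab: "a * b = p^2" using e1 e2
    by (simp add: a_def b_def p_def complex_eq_iff power2_eq_square algebra_simps)
  have "cmod a * cmod b = cmod (p^2)" by (simp only: norm_mult[symmetric] ab)
  also have "\<dots> = (cmod p)^2" by (rule norm_power)
  also have "\<dots> = x1*x1 + y1*y1" unfolding cmod_power2 by (simp add: p_def power2_eq_square)
  finally have n1: "cmod a * cmod b = x1*x1 + y1*y1" .
  have n2: "(cmod a)^2 = (x2 - y3)^2 + (y2 + x3)^2" unfolding cmod_power2 by (simp add: a_def power2_eq_square algebra_simps)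
  have n3: "(cmod b)^2 = (x2 + y3)^2 + (x3 - y2)^2" unfolding cmod_power2 by (simp add: b_def power2_eq_square algebra_simps)
  have "(cmod a - cmod b)^2 = (cmod a)^2 + (cmod b)^2 - 2 * (cmod a * cmod b)"
    by (simp add: power2_diff)
  also have "\<dots> = 4 * (-(x1*x1) + x2*x2 + x3*x3)"
    unfolding n1 n2 n3 using e1 by (simp add: power2_eq_square algebra_simps)
  finally show ?thesis by (simp add: a_def b_def)
qed


lemma entire_K_zero:
  assumes sm: "smooth_surface_on UNIV f" and iso: "spacelike_isothermal UNIV f"
    and ng: "normal_gauss_map UNIV f \<tau>" and H: "\<forall>z. mean_curv f \<tau> z = 0"
  shows "gauss_curv f z = 0"
proof -
  define \<phi> where "\<phi> = (\<lambda>(k::3) z. complex_of_real (pdx f z $ k) - \<i> * complex_of_real (pdy f z $ k))"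
  have hol: "\<phi> k holomorphic_on UNIV" for k
    unfolding holomorphic_on_open[OF open_UNIV] \<phi>_def using phi_holo[OF sm iso ng H] by auto
  define A where "A = (\<lambda>z. \<phi> 2 z - \<i> * \<phi> 3 z)"
  define B where "B = (\<lambda>z. \<phi> 2 z + \<i> * \<phi> 3 z)"
  have hA: "A holomorphic_on UNIV" unfolding A_def by (intro holomorphic_intros hol)
  have hB: "B holomorphic_on UNIV" unfolding B_def by (intro holomorphic_intros hol)
  have lam: "4 * conf_factor f w = (cmod (A w) - cmod (B w))^2" for w
  proof -
    have i: "lor (pdx f w) (pdx f w) = lor (pdy f w) (pdy f w)" "lor (pdx f w) (pdy f w) = 0"
      using iso unfolding spacelike_isothermal_def by blast+
    have Aw: "A w = Complex (pdx f w $ 2 - pdy f w $ 3) (- pdy f w $ 2 - pdx f w $ 3)"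
      by (simp add: A_def \<phi>_def complex_eq_iff)
    have Bw: "B w = Complex (pdx f w $ 2 + pdy f w $ 3) (pdx f w $ 3 - pdy f w $ 2)"
      by (simp add: B_def \<phi>_def complex_eq_iff)
    show ?thesis
      unfolding Aw Bw conf_factor_def
      by (rule alg_conf[of "pdx f w $ 1" "pdx f w $ 2" "pdx f w $ 3" "pdy f w $ 1" "pdy f w $ 2" "pdy f w $ 3",
            folded lor_def]) (use i in \<open>simp_all add: lor_def\<close>)
  qed
  have pos: "conf_factor f w > 0" for w
    using iso unfolding spacelike_isothermal_def conf_factor_def by blast
  have ne: "cmod (A w) - cmod (B w) \<noteq> 0" for w
    using lam[of w] pos[of w] by auto
  have cd: "continuous_on UNIV (\<lambda>w. cmod (A w) - cmod (B w))"
    using holomorphic_on_imp_continuous_on[OF hA] holomorphic_on_imp_continuous_on[OF hB]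
    by (intro continuous_intros)
  obtain p c where hp: "p holomorphic_on UNIV" and pnz: "\<And>w. p w \<noteq> 0" and c: "cmod c < 1"
    and pl: "\<And>w. 4 * conf_factor f w = (cmod (p w))^2 * (1 - cmod c)^2"
  proof -
    from sign_const[OF cd] ne
    consider "\<forall>w. cmod (A w) < cmod (B w)" | "\<forall>w. cmod (B w) < cmod (A w)" by force
    then show ?thesis
    proof cases
      case 1
      then obtain c where c: "cmod c < 1" "\<And>w. A w = c * B w" using liou[OF hB hA] by blast
      show ?thesis
      proof (rule that[OF hB _ c(1)])
        fix w show "B w \<noteq> 0" using 1 by (metis norm_ge_zero norm_zero not_less)
        have "4 * conf_factor f w = (cmod c * cmod (B w) - cmod (B w))^2"
          using lam[of w] c(2)[of w] by (simp add: norm_mult)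
        then show "4 * conf_factor f w = (cmod (B w))^2 * (1 - cmod c)^2"
          by (simp add: power2_eq_square algebra_simps)
      qed
    next
      case 2
      then obtain c where c: "cmod c < 1" "\<And>w. B w = c * A w" using liou[OF hA hB] by blast
      show ?thesis
      proof (rule that[OF hA _ c(1)])
        fix w show "A w \<noteq> 0" using 2 by (metis norm_ge_zero norm_zero not_less)
        have "4 * conf_factor f w = (cmod (A w) - cmod c * cmod (A w))^2"
          using lam[of w] c(2)[of w] by (simp add: norm_mult)
        then show "4 * conf_factor f w = (cmod (A w))^2 * (1 - cmod c)^2"
          by (simp add: power2_eq_square algebra_simps)
      qed
    qed
  qed
  have "simply_connected (UNIV :: complex set)" by (rule convex_imp_simply_connected[OF convex_UNIV])
  then obtain h where hh: "h holomorphic_on UNIV" and ph: "\<And>w. p w = exp (h w)"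
    using pnz hp unfolding simply_connected_eq_holomorphic_log[OF open_UNIV] by blast
  define C where "C = (1 - cmod c)^2 / 4"
  have C: "C > 0" using c by (simp add: C_def)
  define G where "G = (\<lambda>w. complex_of_real (ln C) + 2 * h w)"
  have hG: "G holomorphic_on UNIV" unfolding G_def using hh by (intro holomorphic_intros)
  have lnl: "ln (conf_factor f w) = Re (G w)" for w
  proof -
    have "(cmod (p w))^2 = exp (2 * Re (h w))"
      by (simp add: ph power2_eq_square exp_add[symmetric])
    then have "conf_factor f w = C * exp (2 * Re (h w))"
      using pl[of w] by (simp add: C_def algebra_simps)
    then show ?thesis using C by (simp add: G_def ln_mult)
  qed
  have "(\<lambda>w. ln (conf_factor f w)) = (\<lambda>w. Re (G w))" using lnl by auto
  then show ?thesis
    unfolding gauss_curv_def using harmonic_Re[OF hG, of z] by simp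
qed


theorem mainTheorem3:
  fixes U :: "complex set" and f \<tau> :: "complex \<Rightarrow> real^3"
  assumes "open U" and "connected U" and "U \<noteq> {}" and "simply_connected U"
    and "smooth_surface_on U f"
    and "spacelike_isothermal U f"
    and "normal_gauss_map U f \<tau>"
    and "\<forall>z\<in>U. mean_curv f \<tau> z = 0"
    and "{w\<in>U. gauss_curv f w = 0} = {}"
  shows "conf_equiv_disk U"
proof (cases "U = UNIV")
  case True
  have "\<forall>z. mean_curv f \<tau> z = 0" using assms(8) True by simp
  then have "gauss_curv f z = 0" for z
    using entire_K_zero[of f \<tau> z] assms(5,6,7) True by simp
  then show ?thesis using assms(9) True by simp
next
  case False
  from assms(4) have "U = {} \<or> U = UNIV \<or>
           (\<exists>p q. p holomorphic_on U \<and> q holomorphic_on ball 0 1 \<and>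
                 (\<forall>z \<in> U. p z \<in> ball 0 1 \<and> q (p z) = z) \<and>
                 (\<forall>z \<in> ball 0 1. q z \<in> U \<and> p (q z) = z))"
    by (simp add: simply_connected_eq_biholomorphic_to_disc[OF assms(1)])
  then obtain p q where p: "p holomorphic_on U" and pq: "\<forall>z \<in> U. p z \<in> ball 0 1 \<and> q (p z) = z"
    and qp: "\<forall>z \<in> ball 0 1. q z \<in> U \<and> p (q z) = z"
    using False assms(3) by blast
  have "bij_betw p U (ball 0 1)"
    by (rule bij_betw_byWitness[of U q p]) (use pq qp in auto)
  then show ?thesis unfolding conf_equiv_disk_def using p by blast
qed

end
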